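(* Let $X$ be a setoid. Define $\mathsf{join}:\mathfrak{S}(\mathfrak{S}X)\to\mathfrak{S}X$ by $\mathsf{join}\ \hat f := f$ and $$\mathsf{join}(\mathsf{glue}\ o\ F\ G) := \mathsf{glue}\ o\ \big(\mathsf{join}(\mathsf{map}\,(\lambda x.\,\mathsf{SplitL}\ x\ o)\,F)\big)\ \big(\mathsf{join}(\mathsf{map}\,(\lambda x.\,\mathsf{SplitR}\ x\ o)\,G)\big).$$ Then $(\mathfrak{S}, \mathsf{const}, \mathsf{map}, \mathsf{join})$ is a monad up to $\asymp$: $\mathsf{join}$ and $\mathsf{map}\,\varphi$ (for respectful $\varphi$) respect $\asymp$, and for all $f\in\mathfrak{S}X$ and $H\in\mathfrak{S}(\mathfrak{S}(\mathfrak{S}X))$: $\mathsf{join}(\hat f)\asymp f$, $\mathsf{join}(\mathsf{map}\ \mathsf{const}\ f)\asymp f$, and $\mathsf{join}(\mathsf{join}\ H)\asymp\mathsf{join}(\mathsf{map}\ \mathsf{join}\ H)$.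
   Context: Step functions. For a type $X$, $\mathfrak{S}X$ is the inductive type of (formal, rational) step functions on $[0,1]$: it has the constructors $\mathsf{const}\ x$ for $x\in X$ (also written $\hat x$), and $\mathsf{glue}\ o\ f\ g$ for $o\in(0,1)\cap\mathbb{Q}$ and $f,g\in\mathfrak{S}X$. Split. For $a\in(0,1)\cap\mathbb{Q}$: $\mathsf{SplitL}\ \hat x\ a := \hat x$, $\mathsf{SplitR}\ \hat x\ a:=\hat x$, and $\mathsf{SplitL}(\mathsf{glue}\ o\ f_l\ f_r)\ a :=$ $\mathsf{SplitL}\ f_l\ (a/o)$ if $a<o$; $f_l$ if $a=o$; $\mathsf{glue}\ (o/a)\ f_l\ (\mathsf{SplitL}\ f_r\ \tfrac{a-o}{1-o})$ if $a>o$. $\mathsf{SplitR}(\mathsf{glue}\ o\ f_l\ f_r)\ a :=$ $\mathsf{glue}\ \tfrac{o-a}{1-a}\ (\mathsf{SplitR}\ f_l\ (a/o))\ f_r$ if $a<o$; $f_r$ if $a=o$; $\mathsf{SplitR}\ f_r\ \tfrac{a-o}{1-o}$ if $a>o$. Map and ap. $\mathsf{map}\ \varphi\ \hat x := \widehat{\varphi x}$, $\mathsf{map}\ \varphi\ (\mathsf{glue}\ o\ f\ g):=\mathsf{glue}\ o\ (\mathsf{map}\ \varphi\ f)(\mathsf{map}\ \varphi\ g)$. For $F\in\mathfrak{S}(X\Rightarrow Y)$, $x\in\mathfrak{S}X$: $\hat\varphi @ x := \mathsf{map}\ \varphi\ x$, and $(\mathsf{glue}\ o\ F_l\ F_r)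 @ x := \mathsf{glue}\ o\ (F_l @ \mathsf{SplitL}\ x\ o)\ (F_r @ \mathsf{SplitR}\ x\ o)$. Write $f\{\circledast\}g := (\lambda u v. u\circledast v)\circ f @ g$ where $\varphi\circ x:=\mathsf{map}\ \varphi\ x$. Fold. $\mathsf{fold}\ \varphi\ \psi\ \hat x:=\varphi x$, $\mathsf{fold}\ \varphi\ \psi\ (\mathsf{glue}\ o\ f\ g) := \psi\ o\ (\mathsf{fold}\ \varphi\ \psi\ f)(\mathsf{fold}\ \varphi\ \psi\ g)$. $\mathsf{fold}_\star$ is $\mathsf{fold}\ \mathrm{id}\ (\lambda o\,p\,q.\ p\wedge q)$. Equivalence. For a setoid $X$ and $f,g\in\mathfrak{S}X$, $f\asymp_{\mathfrak{S}X} g := \mathsf{fold}_\star(f\{\asymp_X\}g)$; $\mathfrak{S}X$ is itself a setoid with this relation, so $\mathfrak{S}(\mathfrak{S}X)$ etc. carry the iterated relation. *)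

theory Defs
  imports Main "HOL.Rat"
begin

typedef oq = "{q::rat. 0 < q \<and> q < 1}"
  by (rule exI[of _ "1/2"]) simp

text \<open>Formal rational step functions on [0,1].\<close>
datatype 'a stepfun = Const 'a | Glue oq "'a stepfun" "'a stepfun"

abbreviation smap :: "('a \<Rightarrow> 'b) \<Rightarrow> 'a stepfun \<Rightarrow> 'b stepfun" where
  "smap \<equiv> map_stepfun"

lemma smap_simps: "smap \<phi> (Const x) = Const (\<phi> x)"
  "smap \<phi> (Glue c f g) = Glue c (smap \<phi> f) (smap \<phi> g)"
  by simp_all

fun SplitL :: "'a stepfun \<Rightarrow> oq \<Rightarrow> 'a stepfun" where
  "SplitL (Const x) a = Const x"
| "SplitL (Glue c fl fr) a =
     (let a' = Rep_oq a; o' = Rep_oq c in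
      if a' < o' then SplitL fl (Abs_oq (a' / o'))
      else if a' = o' then fl
      else Glue (Abs_oq (o' / a')) fl (SplitL fr (Abs_oq ((a' - o') / (1 - o')))))"

fun SplitR :: "'a stepfun \<Rightarrow> oq \<Rightarrow> 'a stepfun" where
  "SplitR (Const x) a = Const x"
| "SplitR (Glue c fl fr) a =
     (let a' = Rep_oq a; o' = Rep_oq c in
      if a' < o' then Glue (Abs_oq ((o' - a') / (1 - a'))) (SplitR fl (Abs_oq (a' / o'))) fr
      else if a' = o' then fr
      else SplitR fr (Abs_oq ((a' - o') / (1 - o'))))"

fun ap :: "('a \<Rightarrow> 'b) stepfun \<Rightarrow> 'a stepfun \<Rightarrow> 'b stepfun" where
  "ap (Const \<phi>) x = smap \<phi> x"
| "ap (Glue c Fl Fr) x = Glue c (ap Fl (SplitL x c)) (ap Fr (SplitR x c))"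

fun sfold :: "('a \<Rightarrow> 'b) \<Rightarrow> (oq \<Rightarrow> 'b \<Rightarrow> 'b \<Rightarrow> 'b) \<Rightarrow> 'a stepfun \<Rightarrow> 'b" where
  "sfold \<phi> \<psi> (Const x) = \<phi> x"
| "sfold \<phi> \<psi> (Glue c f g) = \<psi> c (sfold \<phi> \<psi> f) (sfold \<phi> \<psi> g)"

definition fold_star :: "bool stepfun \<Rightarrow> bool" where
  "fold_star = sfold id (\<lambda>c p q. p \<and> q)"

definition lift2 :: "('a \<Rightarrow> 'b \<Rightarrow> 'c) \<Rightarrow> 'a stepfun \<Rightarrow> 'b stepfun \<Rightarrow> 'c stepfun" where
  "lift2 op f g = ap (smap (\<lambda>u v. op u v) f) g"

definition eqS :: "('a \<Rightarrow> 'a \<Rightarrow> bool) \<Rightarrow> 'a stepfun \<Rightarrow> 'a stepfun \<Rightarrow> bool" where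
  "eqS R f g = fold_star (lift2 R f g)"

lemma size_smap[simp]: "size (smap \<phi> F) = size F"
  by (induction F) auto

function sjoin :: "'a stepfun stepfun \<Rightarrow> 'a stepfun" where
  "sjoin (Const f) = f"
| "sjoin (Glue c F G) =
     Glue c (sjoin (smap (\<lambda>x. SplitL x c) F)) (sjoin (smap (\<lambda>x. SplitR x c) G))"
  by pat_completeness auto
termination
  by (relation "measure size") auto

end

theory Submission
  imports Defs
begin

lemma rep_oq: "0 < Rep_oq c" "Rep_oq c < 1" using Rep_oq[of c] by auto

lemma absinv: "0 < q \<Longrightarrow> q < 1 \<Longrightarrow> Rep_oq (Abs_oq q) = q"
  by (simp add: Abs_oq_inverse)

fun ev :: "'a stepfun \<Rightarrow> rat \<Rightarrow> 'a" where
  "ev (Const x) t = x"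
| "ev (Glue c f g) t = (if t < Rep_oq c then ev f (t / Rep_oq c)
      else ev g ((t - Rep_oq c) / (1 - Rep_oq c)))"

lemma ev_smap: "ev (smap \<phi> f) t = \<phi> (ev f t)"
  by (induction f arbitrary: t) auto

lemma ev_SplitL: "0 \<le> t \<Longrightarrow> t < 1 \<Longrightarrow> ev (SplitL f a) t = ev f (Rep_oq a * t)"
proof (induction f arbitrary: a t)
  case (Const x) then show ?case by simp
next
  case (Glue c fl fr)
  define a' where "a' = Rep_oq a"
  define o' where "o' = Rep_oq c"
  have a0: "0 < a'" "a' < 1" using rep_oq a'_def by auto
  have o0: "0 < o'" "o' < 1" using rep_oq o'_def by auto
  have at: "a' * t < a'" using Glue.prems a0 by (simp add: mult_less_cancel_left1)
  have at0: "0 \<le> a' * t" using Glue.prems a0 by simp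
  consider "a' < o'" | "a' = o'" | "a' > o'" by linarith
  then show ?case
  proof cases
    case 1
    have r: "Rep_oq (Abs_oq (a'/o')) = a'/o'" using 1 a0 o0 by (intro absinv) auto
    have "ev (SplitL (Glue c fl fr) a) t = ev (SplitL fl (Abs_oq (a'/o'))) t"
      using 1 by (simp add: a'_def o'_def Let_def)
    also have "\<dots> = ev fl (a'/o' * t)" using Glue.IH(1) Glue.prems r by simp
    also have "\<dots> = ev (Glue c fl fr) (a' * t)" using 1 at o0 by (simp add: o'_def[symmetric])
    finally show ?thesis by (simp add: a'_def)
  next
    case 2
    have "ev (SplitL (Glue c fl fr) a) t = ev fl t"
      using 2 by (simp add: a'_def o'_def Let_def)
    also have "\<dots> = ev (Glue c fl fr) (a' * t)" using 2 at o0 by (simp add: o'_def[symmetric])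
    finally show ?thesis by (simp add: a'_def)
  next
    case 3
    define b where "b = (a' - o') / (1 - o')"
    define d where "d = o' / a'"
    have b: "0 < b" "b < 1" using 3 a0 o0 by (auto simp: b_def field_simps)
    have d: "0 < d" "d < 1" using 3 a0 o0 by (auto simp: d_def field_simps)
    have rb: "Rep_oq (Abs_oq b) = b" using b by (rule absinv)
    have rd: "Rep_oq (Abs_oq d) = d" using d by (rule absinv)
    have e: "ev (SplitL (Glue c fl fr) a) t = ev (Glue (Abs_oq d) fl (SplitL fr (Abs_oq b))) t"
      using 3 by (simp add: a'_def o'_def Let_def b_def d_def)
    show ?thesis
    proof (cases "t < d")
      case True
      have "a' * t < o'" using True a0 by (simp add: d_def field_simps)
      moreover have "t / d = a' * t / o'" using a0 o0 by (simp add: d_def field_simps)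
      ultimately show ?thesis using e True rd by (simp add: a'_def[symmetric] o'_def[symmetric])
    next
      case False
      have ge: "\<not> a' * t < o'" using False a0 by (simp add: d_def field_simps)
      define s where "s = (t - d) / (1 - d)"
      have s: "0 \<le> s" "s < 1" using False d Glue.prems by (auto simp: s_def field_simps)
      have s2: "s = (a' * t - o') / (a' - o')"
        using a0 o0 3 by (simp add: s_def d_def field_simps)
      have bs: "b * s = (a' * t - o') / (1 - o')"
      proof -
        have ne: "a' - o' \<noteq> 0" "1 - o' \<noteq> 0" using 3 o0 by auto
        have "b * s = ((a' - o') * (a' * t - o')) / ((a' - o') * (1 - o'))"
          by (simp add: b_def s2 mult.commute)
        also have "\<dots> = (a' * t - o') / (1 - o')" using ne by simp
        finally show ?thesis .
      qed
      have "ev (SplitL (Glue c fl fr) a) t = ev (SplitL fr (Abs_oq b)) s"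
        using e False rd by (simp add: s_def)
      also have "\<dots> = ev fr (b * s)" using Glue.IH(2) s rb by simp
      also have "\<dots> = ev (Glue c fl fr) (a' * t)" using ge bs by (simp add: o'_def[symmetric])
      finally show ?thesis by (simp add: a'_def)
    qed
  qed
qed

lemma ev_SplitR: "0 \<le> t \<Longrightarrow> t < 1 \<Longrightarrow> ev (SplitR f a) t = ev f (Rep_oq a + (1 - Rep_oq a) * t)"
proof (induction f arbitrary: a t)
  case (Const x) then show ?case by simp
next
  case (Glue c fl fr)
  define a' where "a' = Rep_oq a"
  define o' where "o' = Rep_oq c"
  define x where "x = a' + (1 - a') * t"
  have a0: "0 < a'" "a' < 1" using rep_oq a'_def by auto
  have o0: "0 < o'" "o' < 1" using rep_oq o'_def by auto
  have x0: "a' \<le> x" "x < 1"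
  proof -
    have "0 \<le> (1 - a') * t" using Glue.prems a0 by simp
    then show "a' \<le> x" by (simp add: x_def)
    have "(1 - a') * t < (1 - a') * 1" using Glue.prems a0 by (intro mult_strict_left_mono) auto
    then show "x < 1" by (simp add: x_def)
  qed
  consider "a' < o'" | "a' = o'" | "a' > o'" by linarith
  then show ?case
  proof cases
    case 1
    define d where "d = (o' - a') / (1 - a')"
    have d: "0 < d" "d < 1" using 1 a0 o0 by (auto simp: d_def field_simps)
    have rd: "Rep_oq (Abs_oq d) = d" using d by (rule absinv)
    have r: "Rep_oq (Abs_oq (a'/o')) = a'/o'" using 1 a0 o0 by (intro absinv) auto
    have e: "ev (SplitR (Glue c fl fr) a) t = ev (Glue (Abs_oq d) (SplitR fl (Abs_oq (a'/o'))) fr) t"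
      using 1 by (simp add: a'_def o'_def Let_def d_def)
    show ?thesis
    proof (cases "t < d")
      case True
      have xl: "x < o'" using True a0 by (simp add: d_def x_def field_simps)
      have s: "0 \<le> t / d" "t / d < 1" using True d Glue.prems by (auto simp: field_simps)
      have eq: "a'/o' + (1 - a'/o') * (t / d) = x / o'"
        using a0 o0 1 by (simp add: d_def x_def field_simps)
      have "ev (SplitR (Glue c fl fr) a) t = ev (SplitR fl (Abs_oq (a'/o'))) (t/d)"
        using e True rd by simp
      also have "\<dots> = ev fl (x / o')" using Glue.IH(1)[OF s] r eq by simp
      also have "\<dots> = ev (Glue c fl fr) x" using xl by (simp add: o'_def[symmetric])
      finally show ?thesis by (simp add: a'_def x_def)
    next
      case False
      have xl: "\<not> x < o'" using False a0 by (simp add: d_def x_def field_simps)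
      have eq: "(t - d) / (1 - d) = (x - o') / (1 - o')"
      proof -
        have n: "1 - a' \<noteq> 0" "1 - o' \<noteq> 0" using a0 o0 by auto
        have "1 - d = (1 - o') / (1 - a')" using n by (simp add: d_def field_simps)
        moreover have "t - d = (x - o') / (1 - a')" using n by (simp add: d_def x_def field_simps)
        ultimately show ?thesis using n by simp
      qed
      have "ev (SplitR (Glue c fl fr) a) t = ev fr ((t - d) / (1 - d))"
        using e False rd by simp
      also have "\<dots> = ev (Glue c fl fr) x" using xl eq by (simp add: o'_def[symmetric])
      finally show ?thesis by (simp add: a'_def x_def)
    qed
  next
    case 2
    have xl: "\<not> x < o'" using x0 2 by simp
    have eq: "(x - o') / (1 - o') = t" using 2 o0 by (simp add: x_def field_simps)
    have "ev (SplitR (Glue c fl fr) a) t = ev fr t"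
      using 2 by (simp add: a'_def o'_def Let_def)
    also have "\<dots> = ev (Glue c fl fr) x" using xl eq by (simp add: o'_def[symmetric])
    finally show ?thesis by (simp add: a'_def x_def)
  next
    case 3
    define b where "b = (a' - o') / (1 - o')"
    have b: "0 < b" "b < 1" using 3 a0 o0 by (auto simp: b_def field_simps)
    have rb: "Rep_oq (Abs_oq b) = b" using b by (rule absinv)
    have xl: "\<not> x < o'" using x0 3 by simp
    have eq: "b + (1 - b) * t = (x - o') / (1 - o')"
    proof -
      have n: "1 - o' \<noteq> 0" using o0 by auto
      have "1 - b = (1 - a') / (1 - o')" using n by (simp add: b_def field_simps)
      moreover have "(x - o') / (1 - o') = ((a' - o') + (1 - a') * t) / (1 - o')"
        by (simp add: x_def algebra_simps)
      moreover have "((a' - o') + (1 - a') * t) / (1 - o') = (a' - o') / (1 - o') + (1 - a') * t / (1 - o')"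
        by (rule add_divide_distrib)
      ultimately show ?thesis by (simp add: b_def)
    qed
    have "ev (SplitR (Glue c fl fr) a) t = ev (SplitR fr (Abs_oq b)) t"
      using 3 by (simp add: a'_def o'_def Let_def b_def)
    also have "\<dots> = ev fr (b + (1 - b) * t)" using Glue.IH(2) Glue.prems rb by simp
    also have "\<dots> = ev (Glue c fl fr) x" using xl eq by (simp add: o'_def[symmetric])
    finally show ?thesis by (simp add: a'_def x_def)
  qed
qed

lemma scale_lemmas:
  fixes o' t :: rat
  assumes "0 < o'" "o' < 1" "0 \<le> t" "t < 1"
  shows "t < o' \<Longrightarrow> 0 \<le> t / o' \<and> t / o' < 1"
    and "\<not> t < o' \<Longrightarrow> 0 \<le> (t - o') / (1 - o') \<and> (t - o') / (1 - o') < 1"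
    and "t < o' \<Longrightarrow> o' * (t / o') = t"
    and "\<not> t < o' \<Longrightarrow> o' + (1 - o') * ((t - o') / (1 - o')) = t"
  using assms by (auto simp: field_simps)

lemma ev_ap: "0 \<le> t \<Longrightarrow> t < 1 \<Longrightarrow> ev (ap F x) t = ev F t (ev x t)"
proof (induction F x arbitrary: t rule: ap.induct)
  case (1 \<phi> x) then show ?case by (simp add: ev_smap)
next
  case (2 c Fl Fr x)
  note sc = scale_lemmas[OF rep_oq(1)[of c] rep_oq(2)[of c] 2(3) 2(4)]
  show ?case
  proof (cases "t < Rep_oq c")
    case True
    then show ?thesis using 2(1)[of "t / Rep_oq c"] sc ev_SplitL[of "t / Rep_oq c" x c] by simp
  next
    case False
    then show ?thesis using 2(2)[of "(t - Rep_oq c) / (1 - Rep_oq c)"] sc ev_SplitR[of "(t - Rep_oq c) / (1 - Rep_oq c)" x c] by simp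
  qed
qed

lemma fold_star_ev: "fold_star h \<longleftrightarrow> (\<forall>t. 0 \<le> t \<and> t < 1 \<longrightarrow> ev h t)"
proof (induction h)
  case (Const x) then show ?case by (auto simp: fold_star_def)
next
  case (Glue c f g)
  define o' where "o' = Rep_oq c"
  have o0: "0 < o'" "o' < 1" using rep_oq o'_def by auto
  have fs: "fold_star (Glue c f g) = (fold_star f \<and> fold_star g)" by (simp add: fold_star_def)
  show ?case
  proof
    assume "fold_star (Glue c f g)"
    then have F: "\<forall>t. 0 \<le> t \<and> t < 1 \<longrightarrow> ev f t" and G: "\<forall>t. 0 \<le> t \<and> t < 1 \<longrightarrow> ev g t"
      using fs Glue.IH by auto
    show "\<forall>t. 0 \<le> t \<and> t < 1 \<longrightarrow> ev (Glue c f g) t"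
    proof (intro allI impI)
      fix t :: rat assume t: "0 \<le> t \<and> t < 1"
      note sc = scale_lemmas[OF o0 conjunct1[OF t] conjunct2[OF t]]
      show "ev (Glue c f g) t" using F G sc by (simp add: o'_def[symmetric])
    qed
  next
    assume A: "\<forall>t. 0 \<le> t \<and> t < 1 \<longrightarrow> ev (Glue c f g) t"
    have "ev f s" if s: "0 \<le> s" "s < 1" for s
    proof -
      have a1: "o' * s < o' * 1" using s o0 by (intro mult_strict_left_mono) auto
      have a2: "o' * s < o'" using a1 by (metis mult.right_neutral)
      have a: "0 \<le> o' * s" "o' * s < o'" using s o0 a2 by auto
      have "0 \<le> o' * s" "o' * s < 1" "o' * s < o'" using a o0 by linarith+
      then have "ev (Glue c f g) (o' * s)" using A by blast
      moreover have "ev (Glue c f g) (o' * s) = ev f s" using a2 o0 s by (simp add: o'_def[symmetric])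
      ultimately show ?thesis by simp
    qed
    moreover have "ev g s" if s: "0 \<le> s" "s < 1" for s
    proof -
      have b1: "(1 - o') * s < (1 - o') * 1" using s o0 by (intro mult_strict_left_mono) auto
      have b2: "0 \<le> (1 - o') * s" using s o0 by simp
      have "0 \<le> o' + (1 - o') * s" "o' + (1 - o') * s < 1" "\<not> o' + (1 - o') * s < o'"
      proof -
        define p where "p = (1 - o') * s"
        have "p < 1 - o'" "0 \<le> p" using b1 b2 by (simp_all add: p_def)
        then show "0 \<le> o' + (1 - o') * s" "o' + (1 - o') * s < 1" "\<not> o' + (1 - o') * s < o'"
          using o0 unfolding p_def[symmetric] by linarith+
      qed
      then have "ev (Glue c f g) (o' + (1 - o') * s)" and nl: "\<not> o' + (1 - o') * s < o'" using A by blast+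
      moreover have "(o' + (1 - o') * s - o') / (1 - o') = s" using o0 by (simp add: field_simps)
      ultimately show ?thesis by (simp add: o'_def[symmetric])
    qed
    ultimately show "fold_star (Glue c f g)" using fs Glue.IH by auto
  qed
qed

lemma eqS_ev: "eqS R f g \<longleftrightarrow> (\<forall>t. 0 \<le> t \<and> t < 1 \<longrightarrow> R (ev f t) (ev g t))"
  by (simp add: eqS_def lift2_def fold_star_ev ev_ap ev_smap)

lemma ev_sjoin: "0 \<le> t \<Longrightarrow> t < 1 \<Longrightarrow> ev (sjoin F) t = ev (ev F t) t"
proof (induction F arbitrary: t rule: sjoin.induct)
  case (1 f) then show ?case by simp
next
  case (2 c F G)
  note sc = scale_lemmas[OF rep_oq(1)[of c] rep_oq(2)[of c] 2(3) 2(4)]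
  show ?case
  proof (cases "t < Rep_oq c")
    case True
    then show ?thesis using 2(1)[of "t / Rep_oq c"] sc ev_SplitL[of "t / Rep_oq c" "ev F (t / Rep_oq c)" c] by (simp add: ev_smap)
  next
    case False
    then show ?thesis using 2(2)[of "(t - Rep_oq c) / (1 - Rep_oq c)"] sc ev_SplitR[of "(t - Rep_oq c) / (1 - Rep_oq c)" "ev G ((t - Rep_oq c) / (1 - Rep_oq c))" c] by (simp add: ev_smap)
  qed
qed

theorem mainTheorem10:
  fixes R :: "'a \<Rightarrow> 'a \<Rightarrow> bool"
  assumes "equivp R"
  shows "(\<forall>F G. eqS (eqS R) F G \<longrightarrow> eqS R (sjoin F) (sjoin G))
    \<and> (\<forall>(S :: 'b \<Rightarrow> 'b \<Rightarrow> bool) (\<phi> :: 'a \<Rightarrow> 'b). equivp S \<longrightarrow>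
         (\<forall>x y. R x y \<longrightarrow> S (\<phi> x) (\<phi> y)) \<longrightarrow>
         (\<forall>f g. eqS R f g \<longrightarrow> eqS S (smap \<phi> f) (smap \<phi> g)))
    \<and> (\<forall>f. eqS R (sjoin (Const f)) f)
    \<and> (\<forall>f. eqS R (sjoin (smap Const f)) f)
    \<and> (\<forall>H. eqS R (sjoin (sjoin H)) (sjoin (smap sjoin H)))"
proof -
  have refl: "R x x" for x using assms by (meson equivp_reflp)
  show ?thesis
    by (auto simp: eqS_ev ev_sjoin ev_smap refl)
qed

end
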